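(* Let $p\in[0,1)$ and let $z_l\in\mathbb R^N$ satisfy $\lim_{l\to\infty}z_l=z\in\mathbb R^N$. If $[z]$ has nonempty interior, then (with $\xi_p(z_l)$ defined for all sufficiently large $l$) $$\lim_{l\to\infty}\xi_p(z_l)=\xi_p(z)\quad\text{and}\quad \lim_{l\to\infty}\Phi_p(z_l,\xi_p(z_l))=\Phi_p(z,\xi_p(z)).$$
   Context: Fix unit vectors $v_1,\dots,v_N\in S^{n-1}$ not contained in any closed hemisphere and weights $\alpha_1,\dots,\alpha_N>0$ (i.e. the measure $\mu=\sum_j\alpha_j\delta_{v_j}$). For $z\in\mathbb R^N$ let $[z]=\{x\in\mathbb R^n: x\cdot v_j\le z_j,\ j=1,\dots,N\}$. For $z$ with $[z]$ having nonempty interior and $\xi\in[z]$, set $\Phi_p(z,\xi)=\sum_{j=1}^N(z_j-\xi\cdot v_j)^p\alpha_j$ if $p\in(0,1)$ and $\Phi_0(z,\xi)=\sum_{j=1}^N\alpha_j\log(z_j-\xi\cdot v_j)$ (with $\log 0=-\infty$). It is known that $\sup_{\xi\in[z]}\Phi_p(z,\xi)$ is attained at a unique point, which lies in the interior of $[z]$; this point is denoted $\xi_p(z)$. *)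

theory Defs
  imports "HOL-Analysis.Analysis"
begin

text \<open>Vectors v_0,...,v_(N-1) (indices j < N) in a Euclidean space; z :: nat => real,
  only the coordinates j < N matter.\<close>

definition poly_set :: "nat \<Rightarrow> (nat \<Rightarrow> 'a::euclidean_space) \<Rightarrow> (nat \<Rightarrow> real) \<Rightarrow> 'a set" where
  "poly_set N v z = {x. \<forall>j<N. x \<bullet> v j \<le> z j}"

text \<open>Phi_p(z,xi) as an extended real; for p = 0 the logarithmic functional with log 0 = -infinity.\<close>

definition Phi :: "real \<Rightarrow> nat \<Rightarrow> (nat \<Rightarrow> 'a::euclidean_space) \<Rightarrow> (nat \<Rightarrow> real)
    \<Rightarrow> (nat \<Rightarrow> real) \<Rightarrow> 'a \<Rightarrow> ereal" where
  "Phi p N v \<alpha> z \<xi> =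
     (if p = 0 then
        (if (\<forall>j<N. 0 < z j - \<xi> \<bullet> v j)
         then ereal (\<Sum>j<N. \<alpha> j * ln (z j - \<xi> \<bullet> v j)) else -\<infinity>)
      else ereal (\<Sum>j<N. (z j - \<xi> \<bullet> v j) powr p * \<alpha> j))"

definition xi :: "real \<Rightarrow> nat \<Rightarrow> (nat \<Rightarrow> 'a::euclidean_space) \<Rightarrow> (nat \<Rightarrow> real)
    \<Rightarrow> (nat \<Rightarrow> real) \<Rightarrow> 'a" where
  "xi p N v \<alpha> z = (THE \<xi>. \<xi> \<in> poly_set N v z \<and>
      (\<forall>\<eta>\<in>poly_set N v z. Phi p N v \<alpha> z \<eta> \<le> Phi p N v \<alpha> z \<xi>))"

end

theory Submission
  imports Defs
begin


lemma ln_mid: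
  fixes a b :: real assumes "a > 0" "b > 0"
  shows "(ln a + ln b) / 2 \<le> ln ((a + b) / 2)" and "a \<noteq> b \<Longrightarrow> (ln a + ln b) / 2 < ln ((a + b) / 2)"
proof -
  have e: "ln a + ln b = ln (a * b)" using assms by (simp add: ln_mult)
  have e2: "2 * ln ((a + b) / 2) = ln (((a + b) / 2) * ((a + b) / 2))" using assms by (subst ln_mult) auto
  have "a * b \<le> ((a + b) / 2) * ((a + b) / 2)"
  proof -
    have "0 \<le> (a - b) * (a - b)" by simp
    then show ?thesis by (simp add: field_simps)
  qed
  hence "ln (a * b) \<le> ln (((a + b) / 2) * ((a + b) / 2))" using assms by (simp add: mult_pos_pos)
  then have "ln (a * b) / 2 \<le> ln (((a + b) / 2) * ((a + b) / 2)) / 2" by (rule divide_right_mono) simp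
  then show "(ln a + ln b) / 2 \<le> ln ((a + b) / 2)" unfolding e e2[symmetric] by simp
  assume "a \<noteq> b"
  hence "a * b < ((a + b) / 2) * ((a + b) / 2)"
  proof -
    have "0 < (a - b) * (a - b)" using \<open>a \<noteq> b\<close> by (metis not_real_square_gt_zero right_minus_eq)
    then show ?thesis by (simp add: field_simps)
  qed
  hence "ln (a * b) < ln (((a + b) / 2) * ((a + b) / 2))" using assms by (simp add: mult_pos_pos)
  then have "ln (a * b) / 2 < ln (((a + b) / 2) * ((a + b) / 2)) / 2" by (rule divide_strict_right_mono) simp
  then show "(ln a + ln b) / 2 < ln ((a + b) / 2)" unfolding e e2[symmetric] by simp
qed

lemma powr_mid_lt:
  fixes a b p :: real assumes "0 \<le> a" "a < b" "0 < p" "p < 1"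
  shows "(a powr p + b powr p) / 2 < ((a + b) / 2) powr p"
proof -
  define m where "m = (a + b) / 2"
  have am: "a < m" "m < b" using assms by (auto simp: m_def)
  have cont: "continuous_on {x..y} (\<lambda>t. t powr p)" if "0 \<le> x" for x y :: real
    using that assms by (intro continuous_on_powr') (auto intro: continuous_intros)
  have dif: "(\<lambda>t. t powr p) differentiable (at t)" if "0 < t" for t :: real
    using has_real_derivative_powr[OF that, of p] real_differentiable_def by blast
  obtain l1 s1 where s1: "a < s1" "s1 < m" "DERIV (\<lambda>t. t powr p) s1 :> l1"
     "m powr p - a powr p = (m - a) * l1"
    using MVT[OF am(1) cont[OF assms(1)]] dif assms(1) by (metis le_less_trans)
  obtain l2 s2 where s2: "m < s2" "s2 < b" "DERIV (\<lambda>t. t powr p) s2 :> l2"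
     "b powr p - m powr p = (b - m) * l2"
    using MVT[OF am(2) cont[of m]] dif assms(1) am by (smt (verit))
  have l1: "l1 = p * s1 powr (p - 1)"
    using DERIV_unique[OF s1(3) has_real_derivative_powr] s1 assms by linarith
  have l2: "l2 = p * s2 powr (p - 1)"
    using DERIV_unique[OF s2(3) has_real_derivative_powr] s1 s2 am assms by linarith
  have "s2 powr (p - 1) < s1 powr (p - 1)"
    using assms s1 s2 by (intro powr_less_mono2_neg) auto
  hence "l2 < l1" using l1 l2 assms by simp
  moreover have "m - a = b - m" "b - m > 0" using am by (auto simp: m_def field_simps)
  ultimately have "(b - m) * l2 < (m - a) * l1" by (metis mult_strict_left_mono)
  hence "b powr p - m powr p < m powr p - a powr p"
    using s1(4) s2(4) by simp
  then show ?thesis by (simp add: m_def[symmetric])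
qed

lemma powr_mid:
  fixes a b p :: real assumes "0 \<le> a" "0 \<le> b" "0 < p" "p < 1"
  shows "(a powr p + b powr p) / 2 \<le> ((a + b) / 2) powr p"
    and "a \<noteq> b \<Longrightarrow> (a powr p + b powr p) / 2 < ((a + b) / 2) powr p"
proof -
  show s: "a \<noteq> b \<Longrightarrow> (a powr p + b powr p) / 2 < ((a + b) / 2) powr p"
  proof -
    assume "a \<noteq> b"
    then consider "a < b" | "b < a" by linarith
    then show ?thesis
    proof cases
      case 1 then show ?thesis using powr_mid_lt assms by blast
    next
      case 2 then show ?thesis using powr_mid_lt[of b a p] assms by (simp add: add.commute)
    qed
  qed
  show "(a powr p + b powr p) / 2 \<le> ((a + b) / 2) powr p"
    using s by (cases "a = b") auto
qed



locale lsetup =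
  fixes v :: "nat \<Rightarrow> 'a::euclidean_space" and N :: nat and \<alpha> :: "nat \<Rightarrow> real" and p :: real
  assumes unit: "\<forall>j<N. norm (v j) = 1"
    and not_hemi: "\<not> (\<exists>u. norm u = 1 \<and> (\<forall>j<N. v j \<bullet> u \<ge> 0))"
    and pos: "\<forall>j<N. \<alpha> j > 0"
    and p0: "0 \<le> p" and p1: "p < 1"
begin

lemma hemi_strict: assumes "u \<noteq> 0" shows "\<exists>j<N. v j \<bullet> u > 0"
proof (rule ccontr)
  assume "\<not> ?thesis"
  hence "\<forall>j<N. v j \<bullet> u \<le> 0" by (meson leD not_less)
  hence "\<forall>j<N. v j \<bullet> (- u /\<^sub>R norm u) \<ge> 0"
    by (auto simp: inner_minus_right not_less intro!: mult_nonneg_nonpos)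
  moreover have "norm (- u /\<^sub>R norm u) = 1" using assms by simp
  ultimately show False using not_hemi by blast
qed

lemma N_pos: "N > 0"
proof -
  obtain b :: 'a where "b \<in> Basis" using nonempty_Basis by blast
  hence "b \<noteq> 0" by auto
  then show ?thesis using hemi_strict by fastforce
qed

lemma unif_c: "\<exists>c>0. \<forall>u. norm u = 1 \<longrightarrow> (\<exists>j<N. v j \<bullet> u \<ge> c)"
proof (rule ccontr)
  assume A: "\<not> ?thesis"
  have B: "\<exists>u. norm u = 1 \<and> (\<forall>j<N. v j \<bullet> u < c)" if "c > 0" for c
    using A that by (metis not_le)
  have "\<forall>n::nat. \<exists>u. norm u = 1 \<and> (\<forall>j<N. v j \<bullet> u < 1 / (real n + 1))"
    using B by simp
  then obtain f where f: "\<And>n. norm (f n) = 1" "\<And>n j. j < N \<Longrightarrow> v j \<bullet> f n < 1 / (real n + 1)"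
    by metis
  have "\<forall>n. f n \<in> sphere 0 1" using f by auto
  then obtain l r where l: "l \<in> sphere 0 1" "strict_mono r" "(f \<circ> r) \<longlonglongrightarrow> l"
    using compact_sphere[of "0::'a" 1] unfolding compact_def by metis
  have "v j \<bullet> l \<le> 0" if j: "j < N" for j
  proof -
    have t1: "(\<lambda>n. v j \<bullet> (f \<circ> r) n) \<longlonglongrightarrow> v j \<bullet> l"
      by (intro tendsto_intros l)
    have t2: "(\<lambda>n. 1 / (real (r n) + 1)) \<longlonglongrightarrow> 0"
    proof -
      have "(\<lambda>n. 1 / (real n + 1)) \<longlonglongrightarrow> (0::real)" 
        using LIMSEQ_inverse_real_of_nat by (simp add: inverse_eq_divide add.commute)
      from LIMSEQ_subseq_LIMSEQ[OF this l(2)] show ?thesis by (simp add: o_def)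
    qed
    show ?thesis
      by (rule tendsto_le[OF _ t2 t1]) (auto intro!: always_eventually less_imp_le f(2)[OF j])
  qed
  hence "\<forall>j<N. v j \<bullet> (-l) \<ge> 0" by simp
  moreover have "norm (-l) = 1" using l by simp
  ultimately show False using not_hemi by blast
qed

definition cc where "cc = (SOME c. c > 0 \<and> (\<forall>x. \<exists>j<N. c * norm x \<le> x \<bullet> v j))"

lemma cc_ex: "\<exists>c. c > 0 \<and> (\<forall>x. \<exists>j<N. c * norm x \<le> x \<bullet> v j)"
proof -
  obtain c where c: "c > 0" "\<And>u. norm u = 1 \<Longrightarrow> \<exists>j<N. v j \<bullet> u \<ge> c"
    using unif_c by blast
  have "\<exists>j<N. c * norm x \<le> x \<bullet> v j" for x
  proof (cases "x = 0")
    case True then show ?thesis using N_pos by auto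
  next
    case False
    then obtain j where j: "j < N" "v j \<bullet> (x /\<^sub>R norm x) \<ge> c" using c(2)[of "x /\<^sub>R norm x"] by auto
    have "c * norm x \<le> (v j \<bullet> (x /\<^sub>R norm x)) * norm x"
      using j(2) by (intro mult_right_mono) auto
    also have "\<dots> = x \<bullet> v j" using False by (simp add: inner_commute)
    finally show ?thesis using j(1) by blast
  qed
  then show ?thesis using c(1) by blast
qed

lemma cc_pos: "cc > 0" and cc_prop: "\<exists>j<N. cc * norm x \<le> x \<bullet> v j"
  using someI_ex[OF cc_ex] unfolding cc_def[symmetric] by auto

lemma norm_le: assumes "x \<in> poly_set N v z" shows "cc * norm x \<le> (\<Sum>j<N. \<bar>z j\<bar>)"
proof -
  obtain j where j: "j < N" "cc * norm x \<le> x \<bullet> v j" using cc_prop by blast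
  have "x \<bullet> v j \<le> z j" using assms j(1) by (auto simp: poly_set_def)
  also have "\<dots> \<le> \<bar>z j\<bar>" by simp
  also have "\<dots> \<le> (\<Sum>j<N. \<bar>z j\<bar>)" using j(1) by (intro member_le_sum) auto
  finally show ?thesis using j(2) by linarith
qed

lemma closed_K: "closed (poly_set N v z)"
proof -
  have "poly_set N v z = (\<Inter>j\<in>{..<N}. {x. inner (v j) x \<le> z j})"
    by (auto simp: poly_set_def inner_commute)
  then show ?thesis by (auto intro!: closed_INT closed_halfspace_le)
qed

lemma compact_K: "compact (poly_set N v z)"
proof -
  have "poly_set N v z \<subseteq> cball 0 ((\<Sum>j<N. \<bar>z j\<bar>) / cc)"
    using norm_le cc_pos by (auto simp: field_simps mult.commute)
  then have "bounded (poly_set N v z)" using bounded_cball bounded_subset by blast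
  then show ?thesis using closed_K compact_eq_bounded_closed by blast
qed

lemma strict_interior: assumes "\<forall>j<N. x \<bullet> v j < z j" shows "x \<in> interior (poly_set N v z)"
proof -
  have o: "open (\<Inter>j\<in>{..<N}. {x. inner (v j) x < z j})"
    by (auto intro!: open_INT open_halfspace_lt)
  have "x \<in> (\<Inter>j\<in>{..<N}. {x. inner (v j) x < z j})" using assms by (auto simp: inner_commute)
  moreover have "(\<Inter>j\<in>{..<N}. {x. inner (v j) x < z j}) \<subseteq> poly_set N v z"
    by (auto simp: poly_set_def inner_commute less_imp_le)
  ultimately show ?thesis using o interior_maximal interior_open by blast
qed

lemma interior_iff: "interior (poly_set N v z) \<noteq> {} \<longleftrightarrow> (\<exists>x. \<forall>j<N. x \<bullet> v j < z j)"
proof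
  assume "interior (poly_set N v z) \<noteq> {}"
  then obtain x where "x \<in> interior (poly_set N v z)" by blast
  then obtain e where e: "e > 0" "ball x e \<subseteq> poly_set N v z"
    using mem_interior by blast
  have "x \<bullet> v j < z j" if j: "j < N" for j
  proof -
    have "x + (e/2) *\<^sub>R v j \<in> ball x e" using e(1) unit j by (auto simp: dist_norm)
    hence "(x + (e/2) *\<^sub>R v j) \<bullet> v j \<le> z j" using e(2) j by (auto simp: poly_set_def)
    moreover have "v j \<bullet> v j = 1" using unit j by (simp add: dot_square_norm)
    ultimately show ?thesis using e(1) by (simp add: inner_add_left)
  qed
  then show "\<exists>x. \<forall>j<N. x \<bullet> v j < z j" by blast
next
  assume "\<exists>x. \<forall>j<N. x \<bullet> v j < z j"
  then show "interior (poly_set N v z) \<noteq> {}" using strict_interior by blast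
qed

definition F :: "(nat \<Rightarrow> real) \<Rightarrow> 'a \<Rightarrow> real" where
  "F z \<xi> = (if p = 0 then (\<Sum>j<N. \<alpha> j * ln (z j - \<xi> \<bullet> v j)) else (\<Sum>j<N. (z j - \<xi> \<bullet> v j) powr p * \<alpha> j))"

lemma Phi_eq: "Phi p N v \<alpha> z \<xi> = (if p = 0 \<and> \<not> (\<forall>j<N. 0 < z j - \<xi> \<bullet> v j) then -\<infinity> else ereal (F z \<xi>))"
  by (simp add: Phi_def F_def)

abbreviation K where "K z \<equiv> poly_set N v z"
abbreviation PH where "PH z \<xi> \<equiv> Phi p N v \<alpha> z \<xi>"

definition G :: "real \<Rightarrow> real" where "G t = (if p = 0 then ln t else t powr p)"

lemma F_G: "F z \<xi> = (\<Sum>j<N. \<alpha> j * G (z j - \<xi> \<bullet> v j))"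
  by (simp add: F_def G_def mult.commute)

lemma G_mid:
  assumes "if p = 0 then 0 < a \<and> 0 < b else 0 \<le> a \<and> 0 \<le> b"
  shows "(G a + G b) / 2 \<le> G ((a + b) / 2)" and "a \<noteq> b \<Longrightarrow> (G a + G b) / 2 < G ((a + b) / 2)"
proof -
  have pp: "p \<noteq> 0 \<Longrightarrow> 0 < p" using p0 by linarith
  show "(G a + G b) / 2 \<le> G ((a + b) / 2)"
    using assms ln_mid(1)[of a b] powr_mid(1)[of a b p] p1 pp by (auto simp: G_def split: if_splits)
  show "a \<noteq> b \<Longrightarrow> (G a + G b) / 2 < G ((a + b) / 2)"
    using assms ln_mid(2)[of a b] powr_mid(2)[of a b p] p1 pp by (auto simp: G_def split: if_splits)
qed

lemma gap_mid: "z j - ((1/2) *\<^sub>R (x + y)) \<bullet> v j = ((z j - x \<bullet> v j) + (z j - y \<bullet> v j)) / 2"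
  by (simp add: inner_add_left field_simps)

lemma unique_max:
  assumes x: "x \<in> K z" and y: "y \<in> K z" and mx: "\<forall>\<eta>\<in>K z. PH z \<eta> \<le> PH z x"
    and my: "\<forall>\<eta>\<in>K z. PH z \<eta> \<le> PH z y" and fin: "PH z x \<noteq> -\<infinity>"
  shows "x = y"
proof (rule ccontr)
  assume ne: "x \<noteq> y"
  then obtain j0 where j0: "j0 < N" "v j0 \<bullet> (x - y) > 0" using hemi_strict[of "x - y"] by auto
  have eq: "PH z x = PH z y" using mx my x y by (meson order.antisym)
  have fx: "PH z x = ereal (F z x)" and gx: "p = 0 \<Longrightarrow> \<forall>j<N. 0 < z j - x \<bullet> v j"
    using fin unfolding Phi_eq by (auto split: if_splits)
  have fy: "PH z y = ereal (F z y)" and gy: "p = 0 \<Longrightarrow> \<forall>j<N. 0 < z j - y \<bullet> v j"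
    using fin eq unfolding Phi_eq by (auto split: if_splits)
  have Fe: "F z x = F z y" using eq fx fy by simp
  define m where "m = (1/2) *\<^sub>R (x + y)"
  have dom: "if p = 0 then 0 < z j - x \<bullet> v j \<and> 0 < z j - y \<bullet> v j
             else 0 \<le> z j - x \<bullet> v j \<and> 0 \<le> z j - y \<bullet> v j" if "j < N" for j
    using that gx gy x y by (auto simp: poly_set_def)
  have mK: "m \<in> K z" using x y unfolding poly_set_def m_def by (auto simp: inner_add_left) (smt (verit))
  have mpos: "p = 0 \<Longrightarrow> \<forall>j<N. 0 < z j - m \<bullet> v j" using gx gy by (auto simp: m_def inner_add_left) (smt (verit))
  have fm: "PH z m = ereal (F z m)" using mpos unfolding Phi_eq by auto
  have "(F z x + F z y) / 2 = (\<Sum>j<N. \<alpha> j * ((G (z j - x \<bullet> v j) + G (z j - y \<bullet> v j)) / 2))"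
    by (simp add: F_G sum_divide_distrib[symmetric] sum.distrib[symmetric] algebra_simps)
  also have "\<dots> < (\<Sum>j<N. \<alpha> j * G (z j - m \<bullet> v j))"
  proof (rule sum_strict_mono_ex1)
    have mid: "z j - m \<bullet> v j = ((z j - x \<bullet> v j) + (z j - y \<bullet> v j)) / 2" for j
      unfolding m_def by (rule gap_mid)
    show "\<forall>j\<in>{..<N}. \<alpha> j * ((G (z j - x \<bullet> v j) + G (z j - y \<bullet> v j)) / 2) \<le> \<alpha> j * G (z j - m \<bullet> v j)"
    proof
      fix j assume "j \<in> {..<N}"
      then have j: "j < N" by simp
      show "\<alpha> j * ((G (z j - x \<bullet> v j) + G (z j - y \<bullet> v j)) / 2) \<le> \<alpha> j * G (z j - m \<bullet> v j)"
        unfolding mid using G_mid(1)[OF dom[OF j]] pos j by (intro mult_left_mono) auto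
    qed
    have "z j0 - x \<bullet> v j0 \<noteq> z j0 - y \<bullet> v j0" using j0 by (simp add: inner_diff_right inner_commute)
    then show "\<exists>j\<in>{..<N}. \<alpha> j * ((G (z j - x \<bullet> v j) + G (z j - y \<bullet> v j)) / 2) < \<alpha> j * G (z j - m \<bullet> v j)"
      unfolding mid using G_mid(2)[OF dom[OF j0(1)]] pos j0(1) by (intro bexI[of _ j0]) auto
  qed simp
  finally have "F z x < F z m" using Fe by (simp add: F_G)
  moreover have "PH z m \<le> PH z x" using mx mK by blast
  ultimately show False using fx fm by simp
qed

lemma delta_bound:
  assumes t: "\<forall>i<N. 0 < t i \<and> t i \<le> B" and B: "1 \<le> B"
    and M: "M \<le> (\<Sum>i<N. \<alpha> i * ln (t i))" and j: "j < N"
  shows "exp ((M - (\<Sum>i<N. \<alpha> i) * ln B) / \<alpha> j) \<le> t j"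
proof -
  define f where "f i = \<alpha> i * (ln (t i) - ln B)" for i
  have e: "(\<Sum>i<N. \<alpha> i * ln (t i)) - (\<Sum>i<N. \<alpha> i) * ln B = (\<Sum>i<N. f i)"
    by (simp add: f_def sum_distrib_right sum_distrib_left algebra_simps sum_subtractf)
  have fn: "f i \<le> 0" if "i < N" for i
    using t that pos B unfolding f_def by (intro mult_nonneg_nonpos) (auto intro: less_imp_le)
  have "(\<Sum>i<N. f i) = f j + (\<Sum>i\<in>{..<N} - {j}. f i)" using j by (simp add: sum.remove)
  also have "\<dots> \<le> f j" using fn by (auto intro!: sum_nonpos)
  also have "\<dots> \<le> \<alpha> j * ln (t j)"
  proof -
    have "0 \<le> \<alpha> j * ln B" using pos j B by (intro mult_nonneg_nonneg) (auto simp: less_imp_le)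
    then show ?thesis unfolding f_def by (simp add: right_diff_distrib)
  qed
  finally have "M - (\<Sum>i<N. \<alpha> i) * ln B \<le> \<alpha> j * ln (t j)" using M e by linarith
  hence "(M - (\<Sum>i<N. \<alpha> i) * ln B) / \<alpha> j \<le> ln (t j)" using pos j by (simp add: divide_le_eq mult.commute)
  hence "exp ((M - (\<Sum>i<N. \<alpha> i) * ln B) / \<alpha> j) \<le> exp (ln (t j))" by simp
  also have "\<dots> = t j" using t j by simp
  finally show ?thesis .
qed

lemma gap_le: assumes "x \<in> K z" "j < N"
  shows "z j - x \<bullet> v j \<le> (\<Sum>i<N. \<bar>z i\<bar>) + (\<Sum>i<N. \<bar>z i\<bar>) / cc"
proof -
  have "\<bar>x \<bullet> v j\<bar> \<le> norm x * norm (v j)" by (rule Cauchy_Schwarz_ineq2)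
  also have "\<dots> = norm x" using unit assms(2) by simp
  also have "\<dots> \<le> (\<Sum>i<N. \<bar>z i\<bar>) / cc" using norm_le[OF assms(1)] cc_pos by (simp add: field_simps mult.commute)
  finally have 1: "\<bar>x \<bullet> v j\<bar> \<le> (\<Sum>i<N. \<bar>z i\<bar>) / cc" .
  have 2: "\<bar>z j\<bar> \<le> (\<Sum>i<N. \<bar>z i\<bar>)" using assms(2) by (intro member_le_sum) auto
  show ?thesis using 1 2 by linarith
qed

lemma exist_max:
  assumes x0: "\<forall>j<N. x0 \<bullet> v j < z j"
  shows "\<exists>\<xi>\<in>K z. \<forall>\<eta>\<in>K z. PH z \<eta> \<le> PH z \<xi>"
proof (cases "p = 0")
  case False
  hence pp: "p > 0" using p0 by linarith
  have x0K: "x0 \<in> K z" using x0 by (auto simp: poly_set_def less_imp_le)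
  have "continuous_on (K z) (F z)"
    unfolding F_def using False pp
    by (auto intro!: continuous_intros continuous_on_powr' simp: poly_set_def)
  then obtain \<xi> where "\<xi> \<in> K z" "\<forall>\<eta>\<in>K z. F z \<eta> \<le> F z \<xi>"
    using continuous_attains_sup[OF compact_K] x0K by blast
  then show ?thesis using False by (auto simp: Phi_eq)
next
  case True
  define S where "S = (\<Sum>i<N. \<bar>z i\<bar>)"
  define B where "B = max 1 (S + S / cc)"
  define M where "M = F z x0"
  define d where "d j = exp ((M - (\<Sum>i<N. \<alpha> i) * ln B) / \<alpha> j)" for j
  define K' where "K' = K z \<inter> (\<Inter>j\<in>{..<N}. {x. inner (v j) x \<le> z j - d j})"
  have x0K: "x0 \<in> K z" using x0 by (auto simp: poly_set_def less_imp_le)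
  have bnd: "\<forall>j<N. 0 < z j - \<eta> \<bullet> v j \<and> z j - \<eta> \<bullet> v j \<le> B"
    if "\<eta> \<in> K z" "\<forall>j<N. 0 < z j - \<eta> \<bullet> v j" for \<eta>
    using gap_le[OF that(1)] that(2) unfolding B_def S_def by force
  have inK': "\<eta> \<in> K'" if ea: "\<eta> \<in> K z" "\<forall>j<N. 0 < z j - \<eta> \<bullet> v j" "M \<le> F z \<eta>" for \<eta>
  proof -
    have "d j \<le> z j - \<eta> \<bullet> v j" if j: "j < N" for j
      unfolding d_def
      by (rule delta_bound[OF bnd[OF ea(1,2)] _ _ j]) (use ea True in \<open>unfold F_def, auto simp: B_def\<close>)
    then show ?thesis using ea(1) by (force simp: K'_def inner_commute)
  qed
  have x0pos: "\<forall>j<N. 0 < z j - x0 \<bullet> v j" using x0 by auto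
  have x0K': "x0 \<in> K'" using inK'[OF x0K x0pos] M_def by simp
  have K'pos: "\<forall>j<N. 0 < z j - \<eta> \<bullet> v j" if "\<eta> \<in> K'" for \<eta>
  proof -
    have "d j \<le> z j - \<eta> \<bullet> v j" if "j < N" for j using \<open>\<eta> \<in> K'\<close> that by (force simp: K'_def inner_commute)
    moreover have "0 < d j" for j by (simp add: d_def)
    ultimately show ?thesis by (meson less_le_trans)
  qed
  have cK': "compact K'" unfolding K'_def
    by (intro compact_Int_closed compact_K closed_INT ballI closed_halfspace_le)
  have "continuous_on K' (F z)"
    unfolding F_def using True K'pos
    by (auto intro!: continuous_intros continuous_on_ln) (metis less_irrefl)
  then obtain \<xi> where \<xi>: "\<xi> \<in> K'" "\<forall>\<eta>\<in>K'. F z \<eta> \<le> F z \<xi>"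
    using continuous_attains_sup[OF cK'] x0K' by blast
  have \<xi>K: "\<xi> \<in> K z" using \<xi>(1) by (simp add: K'_def)
  have P\<xi>: "PH z \<xi> = ereal (F z \<xi>)" using K'pos[OF \<xi>(1)] unfolding Phi_eq by simp
  have "PH z \<eta> \<le> PH z \<xi>" if \<eta>: "\<eta> \<in> K z" for \<eta>
  proof (cases "\<forall>j<N. 0 < z j - \<eta> \<bullet> v j")
    case False then show ?thesis using True unfolding Phi_eq by simp
  next
    case pe: True
    have P\<eta>: "PH z \<eta> = ereal (F z \<eta>)" using pe unfolding Phi_eq by simp
    show ?thesis
    proof (cases "M \<le> F z \<eta>")
      case True then show ?thesis using inK'[OF \<eta> pe] \<xi>(2) P\<eta> P\<xi> by simp
    next
      case False
      then have "F z \<eta> \<le> F z \<xi>" using \<xi>(2) x0K' M_def by force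
      then show ?thesis using P\<eta> P\<xi> by simp
    qed
  qed
  then show ?thesis using \<xi>K by blast
qed

lemma xi_ex1:
  assumes "interior (K z) \<noteq> {}"
  shows "\<exists>!\<xi>. \<xi> \<in> K z \<and> (\<forall>\<eta>\<in>K z. PH z \<eta> \<le> PH z \<xi>)"
    and "\<forall>\<xi>. \<xi> \<in> K z \<and> (\<forall>\<eta>\<in>K z. PH z \<eta> \<le> PH z \<xi>) \<longrightarrow> PH z \<xi> \<noteq> -\<infinity>"
proof -
  obtain x0 where x0: "\<forall>j<N. x0 \<bullet> v j < z j" using assms interior_iff by blast
  have x0K: "x0 \<in> K z" using x0 by (auto simp: poly_set_def less_imp_le)
  have P0: "PH z x0 = ereal (F z x0)" using x0 unfolding Phi_eq by simp
  show fin: "\<forall>\<xi>. \<xi> \<in> K z \<and> (\<forall>\<eta>\<in>K z. PH z \<eta> \<le> PH z \<xi>) \<longrightarrow> PH z \<xi> \<noteq> -\<infinity>"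
    using x0K P0 by (metis MInfty_neq_ereal(1) ereal_infty_less_eq(2))
  obtain \<xi> where "\<xi> \<in> K z" "\<forall>\<eta>\<in>K z. PH z \<eta> \<le> PH z \<xi>" using exist_max[OF x0] by blast
  then show "\<exists>!\<xi>. \<xi> \<in> K z \<and> (\<forall>\<eta>\<in>K z. PH z \<eta> \<le> PH z \<xi>)"
    using unique_max fin by blast
qed

lemma xi_props:
  assumes "interior (K z) \<noteq> {}"
  shows "xi p N v \<alpha> z \<in> K z" "\<forall>\<eta>\<in>K z. PH z \<eta> \<le> PH z (xi p N v \<alpha> z)"
    "PH z (xi p N v \<alpha> z) = ereal (F z (xi p N v \<alpha> z))"
    "p = 0 \<Longrightarrow> \<forall>j<N. 0 < z j - xi p N v \<alpha> z \<bullet> v j"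
proof -
  have th: "xi p N v \<alpha> z \<in> K z \<and> (\<forall>\<eta>\<in>K z. PH z \<eta> \<le> PH z (xi p N v \<alpha> z))"
    unfolding xi_def by (rule theI'[OF xi_ex1(1)[OF assms]])
  then show "xi p N v \<alpha> z \<in> K z" "\<forall>\<eta>\<in>K z. PH z \<eta> \<le> PH z (xi p N v \<alpha> z)" by auto
  have "PH z (xi p N v \<alpha> z) \<noteq> -\<infinity>" using th xi_ex1(2)[OF assms] by blast
  then show "PH z (xi p N v \<alpha> z) = ereal (F z (xi p N v \<alpha> z))"
    "p = 0 \<Longrightarrow> \<forall>j<N. 0 < z j - xi p N v \<alpha> z \<bullet> v j"
    unfolding Phi_eq by (auto split: if_splits)
qed

lemma xi_eq:
  assumes "interior (K z) \<noteq> {}" "\<xi> \<in> K z" "\<forall>\<eta>\<in>K z. PH z \<eta> \<le> PH z \<xi>"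
  shows "xi p N v \<alpha> z = \<xi>"
  unfolding xi_def using the1_equality[OF xi_ex1(1)[OF assms(1)]] assms(2,3) by blast

lemma Phi_cont:
  assumes zs: "\<forall>j<N. (\<lambda>l. zs l j) \<longlonglongrightarrow> z j" and X: "X \<longlonglongrightarrow> x"
    and XK: "eventually (\<lambda>l. X l \<in> K (zs l)) sequentially"
    and xp: "p = 0 \<Longrightarrow> \<forall>j<N. 0 < z j - x \<bullet> v j"
  shows "(\<lambda>l. PH (zs l) (X l)) \<longlonglongrightarrow> PH z x"
proof -
  have gl: "(\<lambda>l. zs l j - X l \<bullet> v j) \<longlonglongrightarrow> z j - x \<bullet> v j" if "j < N" for j
    using zs that X by (auto intro!: tendsto_intros)
  show ?thesis
  proof (cases "p = 0")
    case True
    have ev1: "eventually (\<lambda>l. 0 < zs l j - X l \<bullet> v j) sequentially" if "j < N" for j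
      using order_tendstoD(1)[OF gl[OF that], of 0] xp[OF True] that by simp
    have ev: "eventually (\<lambda>l. \<forall>j\<in>{..<N}. 0 < zs l j - X l \<bullet> v j) sequentially"
      using ev1 by (intro eventually_ball_finite) auto
    have "(\<lambda>l. F (zs l) (X l)) \<longlonglongrightarrow> F z x"
      unfolding F_def using True xp[OF True] gl
      by (auto intro!: tendsto_sum tendsto_mult tendsto_ln)
    hence "(\<lambda>l. ereal (F (zs l) (X l))) \<longlonglongrightarrow> ereal (F z x)" by simp
    moreover have "PH z x = ereal (F z x)" using xp[OF True] unfolding Phi_eq by simp
    moreover have "eventually (\<lambda>l. ereal (F (zs l) (X l)) = PH (zs l) (X l)) sequentially"
      using ev by eventually_elim (unfold Phi_eq, auto)
    ultimately show ?thesis by (metis Lim_transform_eventually)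
  next
    case False
    hence pp: "p > 0" using p0 by linarith
    have ev: "eventually (\<lambda>l. 0 \<le> zs l j - X l \<bullet> v j) sequentially" if "j < N" for j
      using XK by eventually_elim (use that in \<open>auto simp: poly_set_def\<close>)
    have "(\<lambda>l. F (zs l) (X l)) \<longlonglongrightarrow> F z x"
      unfolding F_def using False pp gl ev
      by (auto intro!: tendsto_sum tendsto_mult tendsto_powr')
    then show ?thesis using False unfolding Phi_eq by simp
  qed
qed

lemma main:
  fixes zs :: "nat \<Rightarrow> nat \<Rightarrow> real"
  assumes lim: "\<forall>j<N. (\<lambda>l. zs l j) \<longlonglongrightarrow> z j"
    and int: "interior (K z) \<noteq> {}"
  shows "eventually (\<lambda>l. interior (K (zs l)) \<noteq> {}) sequentially
    \<and> (\<lambda>l. xi p N v \<alpha> (zs l)) \<longlonglongrightarrow> xi p N v \<alpha> z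
    \<and> (\<lambda>l. PH (zs l) (xi p N v \<alpha> (zs l))) \<longlonglongrightarrow> PH z (xi p N v \<alpha> z)"
proof -
  obtain x0 where x0: "\<forall>j<N. x0 \<bullet> v j < z j" using int interior_iff by blast
  have "eventually (\<lambda>l. \<forall>j\<in>{..<N}. x0 \<bullet> v j < zs l j) sequentially"
    using lim x0 by (intro eventually_ball_finite) (auto intro: order_tendstoD(1))
  hence ev_int: "eventually (\<lambda>l. interior (K (zs l)) \<noteq> {}) sequentially"
    by eventually_elim (use interior_iff in blast)
  define X where "X l = xi p N v \<alpha> (zs l)" for l
  define \<xi>s where "\<xi>s = xi p N v \<alpha> z"
  have evX: "eventually (\<lambda>l. X l \<in> K (zs l) \<and> (\<forall>\<eta>\<in>K (zs l). PH (zs l) \<eta> \<le> PH (zs l) (X l))) sequentially"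
    using ev_int by eventually_elim (use xi_props in \<open>auto simp: X_def\<close>)
  have \<xi>sK: "\<xi>s \<in> K z" and \<xi>smax: "\<forall>\<eta>\<in>K z. PH z \<eta> \<le> PH z \<xi>s"
    and \<xi>sF: "PH z \<xi>s = ereal (F z \<xi>s)" and \<xi>spos: "p = 0 \<Longrightarrow> \<forall>j<N. 0 < z j - \<xi>s \<bullet> v j"
    using xi_props[OF int] unfolding \<xi>s_def by auto
  define m where "m = F z \<xi>s"
  define g where "g = Min ((\<lambda>j. z j - x0 \<bullet> v j) ` {..<N})"
  have g: "g > 0" "\<And>j. j < N \<Longrightarrow> g \<le> z j - x0 \<bullet> v j"
  proof -
    show "g > 0" unfolding g_def using N_pos x0 by (subst Min_gr_iff) auto
    show "\<And>j. j < N \<Longrightarrow> g \<le> z j - x0 \<bullet> v j" unfolding g_def by (intro Min_le) auto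
  qed
  define e where "e = (\<lambda>l. \<Sum>j<N. \<bar>zs l j - z j\<bar>)"
  have e0: "e \<longlonglongrightarrow> 0"
  proof -
    have "(\<lambda>l. \<Sum>j<N. \<bar>zs l j - z j\<bar>) \<longlonglongrightarrow> (\<Sum>j<N. \<bar>z j - z j\<bar>)"
      using lim by (intro tendsto_sum tendsto_rabs tendsto_diff) auto
    then show ?thesis by (simp add: e_def)
  qed
  define lam where "lam = (\<lambda>l. e l / g)"
  have lam0: "lam \<longlonglongrightarrow> 0" using tendsto_divide[OF e0 tendsto_const[of g]] g(1) by (simp add: lam_def)
  define y where "y = (\<lambda>l. \<xi>s + lam l *\<^sub>R (x0 - \<xi>s))"
  have yconv: "y \<longlonglongrightarrow> \<xi>s"
    using tendsto_add[OF tendsto_const[of \<xi>s] tendsto_scaleR[OF lam0 tendsto_const[of "x0 - \<xi>s"]]]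
    by (simp add: y_def)
  have yK: "eventually (\<lambda>l. y l \<in> K (zs l)) sequentially"
  proof -
    have "eventually (\<lambda>l. lam l < 1) sequentially" using order_tendstoD(2)[OF lam0, of 1] by simp
    then show ?thesis
    proof eventually_elim
      case (elim l)
      have "zs l j - y l \<bullet> v j \<ge> 0" if j: "j < N" for j
      proof -
        have id: "zs l j - y l \<bullet> v j = (1 - lam l) * (z j - \<xi>s \<bullet> v j) + lam l * (z j - x0 \<bullet> v j) + (zs l j - z j)"
          by (simp add: y_def inner_add_left inner_diff_left algebra_simps)
        have l0: "lam l \<ge> 0" using g(1) by (simp add: lam_def e_def)
        have "0 \<le> (1 - lam l) * (z j - \<xi>s \<bullet> v j)"
          using elim \<xi>sK j by (intro mult_nonneg_nonneg) (auto simp: poly_set_def)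
        moreover have "lam l * g \<le> lam l * (z j - x0 \<bullet> v j)" using l0 g(2)[OF j] by (rule mult_left_mono[rotated])
        moreover have "lam l * g = e l" using g(1) by (simp add: lam_def)
        moreover have "\<bar>zs l j - z j\<bar> \<le> e l" unfolding e_def using j by (intro member_le_sum) auto
        ultimately show ?thesis unfolding id by linarith
      qed
      then show ?case by (auto simp: poly_set_def)
    qed
  qed
  have Pyconv: "(\<lambda>l. PH (zs l) (y l)) \<longlonglongrightarrow> PH z \<xi>s"
    by (rule Phi_cont[OF lim yconv yK \<xi>spos])
  have evy: "eventually (\<lambda>l. ereal (m - 1) < PH (zs l) (y l)) sequentially"
    using order_tendstoD(1)[OF Pyconv, of "ereal (m - 1)"] \<xi>sF m_def by simp
  have "(\<lambda>l. \<Sum>j<N. \<bar>zs l j\<bar>) \<longlonglongrightarrow> (\<Sum>j<N. \<bar>z j\<bar>)"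
    using lim by (intro tendsto_sum tendsto_rabs) auto
  then have "Bseq (\<lambda>l. \<Sum>j<N. \<bar>zs l j\<bar>)" using convergent_imp_Bseq convergent_def by blast
  then obtain Bd where Bd: "Bd > 0" "\<And>l. (\<Sum>j<N. \<bar>zs l j\<bar>) \<le> Bd"
    by (metis BseqE abs_le_D1 real_norm_def)
  have conv: "X \<longlonglongrightarrow> \<xi>s"
  proof (rule ccontr)
    assume "\<not> X \<longlonglongrightarrow> \<xi>s"
    then obtain \<epsilon> where \<epsilon>: "\<epsilon> > 0" "\<And>L. \<exists>l\<ge>L. \<epsilon> \<le> dist (X l) \<xi>s"
      unfolding LIMSEQ_def by (auto simp: not_less)
    have "eventually (\<lambda>l. (X l \<in> K (zs l) \<and> (\<forall>\<eta>\<in>K (zs l). PH (zs l) \<eta> \<le> PH (zs l) (X l)))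
        \<and> y l \<in> K (zs l) \<and> ereal (m - 1) < PH (zs l) (y l)) sequentially"
      using evX yK evy by eventually_elim auto
    then obtain L0 where L0: "\<And>l. l \<ge> L0 \<Longrightarrow> (X l \<in> K (zs l) \<and> (\<forall>\<eta>\<in>K (zs l). PH (zs l) \<eta> \<le> PH (zs l) (X l)))
        \<and> y l \<in> K (zs l) \<and> ereal (m - 1) < PH (zs l) (y l)"
      unfolding eventually_sequentially by blast
    define S where "S = {l. L0 \<le> l \<and> \<epsilon> \<le> dist (X l) \<xi>s}"
    have "infinite S" unfolding infinite_nat_iff_unbounded_le
    proof
      fix mm obtain l where "l \<ge> max mm L0" "\<epsilon> \<le> dist (X l) \<xi>s" using \<epsilon>(2) by blast
      then show "\<exists>l\<ge>mm. l \<in> S" unfolding S_def by auto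
    qed
    then obtain r :: "nat \<Rightarrow> nat" where r: "strict_mono r" "\<And>k. r k \<in> S" using infinite_enumerate by blast
    have "(X \<circ> r) k \<in> cball 0 (Bd / cc)" for k
    proof -
      have "cc * norm (X (r k)) \<le> Bd" using norm_le[of "X (r k)" "zs (r k)"] L0[of "r k"] r(2)[of k] Bd(2)[of "r k"]
        unfolding S_def by force
      then show ?thesis using cc_pos by (simp add: field_simps mult.commute)
    qed
    then obtain \<eta> s where s: "\<eta> \<in> cball 0 (Bd / cc)" "strict_mono s" "(X \<circ> r \<circ> s) \<longlonglongrightarrow> \<eta>"
      using compact_cball[of "0::'a" "Bd / cc"] unfolding compact_def by metis
    define \<sigma> where "\<sigma> = r \<circ> s"
    have \<sigma>: "strict_mono \<sigma>" using r(1) s(2) by (simp add: \<sigma>_def strict_mono_o)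
    have \<sigma>S: "\<sigma> k \<in> S" for k using r(2) by (simp add: \<sigma>_def)
    have \<sigma>L: "L0 \<le> \<sigma> k" for k using \<sigma>S[of k] by (simp add: S_def)
    have Xs: "(\<lambda>k. X (\<sigma> k)) \<longlonglongrightarrow> \<eta>" using s(3) by (simp add: \<sigma>_def o_def)
    have zss: "\<forall>j<N. (\<lambda>k. zs (\<sigma> k) j) \<longlonglongrightarrow> z j"
      using lim LIMSEQ_subseq_LIMSEQ[OF _ \<sigma>] by (auto simp: o_def)
    have XsK: "eventually (\<lambda>k. X (\<sigma> k) \<in> K (zs (\<sigma> k))) sequentially"
      using L0 \<sigma>L by (intro always_eventually) blast
    have \<eta>pos: "\<forall>j<N. 0 < z j - \<eta> \<bullet> v j" if p0': "p = 0"
    proof (intro allI impI)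
      fix j assume j: "j < N"
      define B where "B = max 1 (Bd + Bd / cc)"
      define dj where "dj = exp ((m - 1 - (\<Sum>i<N. \<alpha> i) * ln B) / \<alpha> j)"
      have "dj \<le> zs (\<sigma> k) j - X (\<sigma> k) \<bullet> v j" for k
      proof -
        have l: "X (\<sigma> k) \<in> K (zs (\<sigma> k))" "PH (zs (\<sigma> k)) (y (\<sigma> k)) \<le> PH (zs (\<sigma> k)) (X (\<sigma> k))"
             "ereal (m - 1) < PH (zs (\<sigma> k)) (y (\<sigma> k))"
          using L0[OF \<sigma>L[of k]] by auto
        hence lt: "ereal (m - 1) < PH (zs (\<sigma> k)) (X (\<sigma> k))" by (meson less_le_trans)
        hence gp: "\<forall>i<N. 0 < zs (\<sigma> k) i - X (\<sigma> k) \<bullet> v i" and Fm: "m - 1 < F (zs (\<sigma> k)) (X (\<sigma> k))"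
          using p0' unfolding Phi_eq by (auto split: if_splits)
        have gb: "\<forall>i<N. 0 < zs (\<sigma> k) i - X (\<sigma> k) \<bullet> v i \<and> zs (\<sigma> k) i - X (\<sigma> k) \<bullet> v i \<le> B"
        proof (intro allI impI conjI)
          fix i assume i: "i < N"
          show "0 < zs (\<sigma> k) i - X (\<sigma> k) \<bullet> v i" using gp i by blast
          have "Bd / cc \<ge> (\<Sum>j<N. \<bar>zs (\<sigma> k) j\<bar>) / cc" using Bd(2) cc_pos by (simp add: divide_right_mono)
          then show "zs (\<sigma> k) i - X (\<sigma> k) \<bullet> v i \<le> B"
            using gap_le[OF l(1) i] Bd(2)[of "\<sigma> k"] unfolding B_def by linarith
        qed
        show ?thesis unfolding dj_def
          by (rule delta_bound[OF gb _ _ j]) (use Fm p0' in \<open>unfold F_def, auto simp: B_def\<close>)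
      qed
      moreover have "(\<lambda>k. zs (\<sigma> k) j - X (\<sigma> k) \<bullet> v j) \<longlonglongrightarrow> z j - \<eta> \<bullet> v j"
        using zss j Xs by (auto intro!: tendsto_intros)
      ultimately have "dj \<le> z j - \<eta> \<bullet> v j"
        by (intro tendsto_le[OF _ _ tendsto_const]) auto
      moreover have "0 < dj" by (simp add: dj_def)
      ultimately show "0 < z j - \<eta> \<bullet> v j" by linarith
    qed
    have \<eta>K: "\<eta> \<in> K z"
    proof -
      have "\<eta> \<bullet> v j \<le> z j" if j: "j < N" for j
      proof (rule tendsto_le[OF _ _ _])
        show "(\<lambda>k. zs (\<sigma> k) j) \<longlonglongrightarrow> z j" using zss j by blast
        show "(\<lambda>k. X (\<sigma> k) \<bullet> v j) \<longlonglongrightarrow> \<eta> \<bullet> v j" using Xs by (auto intro!: tendsto_intros)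
        show "eventually (\<lambda>k. X (\<sigma> k) \<bullet> v j \<le> zs (\<sigma> k) j) sequentially"
          using XsK by eventually_elim (use j in \<open>auto simp: poly_set_def\<close>)
      qed simp
      then show ?thesis by (auto simp: poly_set_def)
    qed
    have c1: "(\<lambda>k. PH (zs (\<sigma> k)) (X (\<sigma> k))) \<longlonglongrightarrow> PH z \<eta>"
      by (rule Phi_cont[OF zss Xs XsK \<eta>pos])
    have c2: "(\<lambda>k. PH (zs (\<sigma> k)) (y (\<sigma> k))) \<longlonglongrightarrow> PH z \<xi>s"
      using LIMSEQ_subseq_LIMSEQ[OF Pyconv \<sigma>] by (simp add: o_def)
    have "PH z \<xi>s \<le> PH z \<eta>"
    proof (rule tendsto_le[OF _ c1 c2])
      show "eventually (\<lambda>k. PH (zs (\<sigma> k)) (y (\<sigma> k)) \<le> PH (zs (\<sigma> k)) (X (\<sigma> k))) sequentially"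
        using L0 \<sigma>L by (intro always_eventually) blast
    qed simp
    hence "\<forall>\<zeta>\<in>K z. PH z \<zeta> \<le> PH z \<eta>" using \<xi>smax by (meson order.trans)
    hence "\<xi>s = \<eta>" using xi_eq[OF int \<eta>K] \<xi>s_def by simp
    moreover have "\<epsilon> \<le> dist \<eta> \<xi>s"
    proof (rule tendsto_le[OF _ tendsto_dist[OF Xs tendsto_const] tendsto_const])
      show "eventually (\<lambda>k. \<epsilon> \<le> dist (X (\<sigma> k)) \<xi>s) sequentially"
        using \<sigma>S by (intro always_eventually) (auto simp: S_def)
    qed simp
    ultimately show False using \<epsilon>(1) by simp
  qed
  have "(\<lambda>l. PH (zs l) (X l)) \<longlonglongrightarrow> PH z \<xi>s"
    by (rule Phi_cont[OF lim conv _ \<xi>spos]) (use evX in \<open>eventually_elim, auto\<close>)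
  then show ?thesis using ev_int conv by (simp add: X_def[abs_def] \<xi>s_def)
qed

end



theorem lemma4p2:
  fixes v :: "nat \<Rightarrow> 'a::euclidean_space" and N :: nat and \<alpha> :: "nat \<Rightarrow> real"
    and p :: real and zs :: "nat \<Rightarrow> nat \<Rightarrow> real" and z :: "nat \<Rightarrow> real"
  assumes unit: "\<forall>j<N. norm (v j) = 1"
    and not_hemi: "\<not> (\<exists>u. norm u = 1 \<and> (\<forall>j<N. v j \<bullet> u \<ge> 0))"
    and pos: "\<forall>j<N. \<alpha> j > 0"
    and p: "0 \<le> p" "p < 1"
    and lim: "\<forall>j<N. (\<lambda>l. zs l j) \<longlonglongrightarrow> z j"
    and int: "interior (poly_set N v z) \<noteq> {}"
  shows "eventually (\<lambda>l. interior (poly_set N v (zs l)) \<noteq> {}) sequentially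
    \<and> (\<lambda>l. xi p N v \<alpha> (zs l)) \<longlonglongrightarrow> xi p N v \<alpha> z
    \<and> (\<lambda>l. Phi p N v \<alpha> (zs l) (xi p N v \<alpha> (zs l))) \<longlonglongrightarrow> Phi p N v \<alpha> z (xi p N v \<alpha> z)"
proof -
  interpret lsetup v N \<alpha> p using assms by unfold_locales auto
  show ?thesis using main[OF lim int] by simp
qed


end
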